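(* Let $L$ be a geometric lattice of rank $r+1$ and let $\Delta(L)$ be its order complex, with $h$-vector $(h_0,\dots,h_r)$. Then for every integer $i$ with $1\le i \le r/2$, $$h_{i-1}\le h_i \qquad\text{and}\qquad h_i\le h_{r-i}.$$
   Context: A geometric lattice is a finite graded atomic lattice whose rank function $\rho$ satisfies $\rho(x\vee y)+\rho(x\wedge y)\le \rho(x)+\rho(y)$. The order complex $\Delta(L)$ is the simplicial complex whose vertices are the elements of $L-\{\hat 0,\hat 1\}$ and whose faces are the chains $x_1<\dots<x_k$ in $L-\{\hat 0,\hat 1\}$; it is pure of dimension $r-1$ (facets have $r$ vertices). Let $f_i$ be the number of faces with $i$ vertices ($f_0=1$ for the empty face), $0\le i\le r$. The $h$-vector $(h_0,\dots,h_r)$ is defined by $\sum_{i=0}^r f_i (x-1)^{r-i}=\sum_{i=0}^r h_i x^{r-i}$. *)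

theory Defs
  imports "HOL-Computational_Algebra.Polynomial"
begin

definition covers :: "'a::order \<Rightarrow> 'a \<Rightarrow> bool" where
  "covers x y \<longleftrightarrow> x < y \<and> \<not> (\<exists>z. x < z \<and> z < y)"

definition atoms :: "'a::bounded_lattice set" where
  "atoms = {a. covers bot a}"

definition graded_rank :: "('a::bounded_lattice \<Rightarrow> nat) \<Rightarrow> bool" where
  "graded_rank \<rho> \<longleftrightarrow> \<rho> bot = 0 \<and> (\<forall>x y. covers x y \<longrightarrow> \<rho> y = \<rho> x + 1)"

text \<open>Atomic: every element is the join of the atoms in some set (join of the
  empty set being bottom).\<close>
definition atomic_lattice :: "'a::bounded_lattice itself \<Rightarrow> bool" where
  "atomic_lattice _ \<longleftrightarrow> (\<forall>x::'a. \<exists>A. A \<subseteq> atoms \<and> finite A \<and> x = Sup_fin (insert bot A))"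

definition geometric_lattice :: "('a::{finite,bounded_lattice} \<Rightarrow> nat) \<Rightarrow> bool" where
  "geometric_lattice \<rho> \<longleftrightarrow> graded_rank \<rho> \<and> atomic_lattice TYPE('a) \<and>
     (\<forall>x y. \<rho> (sup x y) + \<rho> (inf x y) \<le> \<rho> x + \<rho> y)"

definition is_chain :: "'a::order set \<Rightarrow> bool" where
  "is_chain S \<longleftrightarrow> (\<forall>x\<in>S. \<forall>y\<in>S. x \<le> y \<or> y \<le> x)"

definition faces :: "'a::{finite,bounded_lattice} itself \<Rightarrow> nat \<Rightarrow> 'a set set" where
  "faces _ i = {S. S \<subseteq> UNIV - {bot, top} \<and> is_chain S \<and> card S = i}"

definition fvec :: "'a::{finite,bounded_lattice} itself \<Rightarrow> nat \<Rightarrow> nat" where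
  "fvec T i = card (faces T i)"

text \<open>h-vector: sum_{i=0}^r f_i (x-1)^(r-i) = sum_{i=0}^r h_i x^(r-i), so h_i is
  the coefficient of x^(r-i).\<close>
definition hvec :: "'a::{finite,bounded_lattice} itself \<Rightarrow> nat \<Rightarrow> nat \<Rightarrow> int" where
  "hvec T r i = coeff (\<Sum>j\<le>r. smult (int (fvec T j)) ([:-1, 1:] ^ (r - j))) (r - i)"

end

theory Submission
  imports Defs
begin


fun adj :: "'b list \<Rightarrow> 'b \<Rightarrow> 'b \<Rightarrow> bool" where
  "adj (x # y # s) a b = ((a = x \<and> b = y) \<or> adj (y # s) a b)"
| "adj _ a b = False"

lemma adj_Cons: "adj (x # s) a b \<longleftrightarrow> (s \<noteq> [] \<and> a = x \<and> b = hd s) \<or> adj s a b"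
  by (cases s) auto

lemma adj_append:
  "adj (xs @ ys) a b \<longleftrightarrow> adj xs a b \<or> adj ys a b \<or> (xs \<noteq> [] \<and> ys \<noteq> [] \<and> a = last xs \<and> b = hd ys)"
  by (induction xs) (auto simp: adj_Cons)

lemma adj_conv_nth: "adj s a b \<longleftrightarrow> (\<exists>j. Suc j < length s \<and> s ! j = a \<and> s ! Suc j = b)"
proof (induction s)
  case Nil
  then show ?case by simp
next
  case (Cons x s)
  show ?case
  proof
    assume "adj (x # s) a b"
    then consider "s \<noteq> [] \<and> a = x \<and> b = hd s" | "adj s a b" by (auto simp: adj_Cons)
    then show "\<exists>j. Suc j < length (x # s) \<and> (x # s) ! j = a \<and> (x # s) ! Suc j = b"
    proof cases
      case 1 then show ?thesis by (intro exI[of _ 0]) (auto simp: hd_conv_nth)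
    next
      case 2 then obtain j where "Suc j < length s \<and> s ! j = a \<and> s ! Suc j = b" using Cons by auto
      then show ?thesis by (intro exI[of _ "Suc j"]) auto
    qed
  next
    assume "\<exists>j. Suc j < length (x # s) \<and> (x # s) ! j = a \<and> (x # s) ! Suc j = b"
    then obtain j where j: "Suc j < length (x # s)" "(x # s) ! j = a" "(x # s) ! Suc j = b" by blast
    show "adj (x # s) a b"
    proof (cases j)
      case 0 then show ?thesis using j by (cases s) (auto simp: adj_Cons)
    next
      case (Suc j') then show ?thesis using j Cons by (auto simp: adj_Cons)
    qed
  qed
qed

lemma adj_set: "adj s a b \<Longrightarrow> a \<in> set s \<and> b \<in> set s"
  by (auto simp: adj_conv_nth)

lemma adj_uniq_r: "distinct s \<Longrightarrow> adj s a b \<Longrightarrow> adj s a b' \<Longrightarrow> b = b'"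
  by (auto simp: adj_conv_nth nth_eq_iff_index_eq)

lemma adj_uniq_l: "distinct s \<Longrightarrow> adj s a b \<Longrightarrow> adj s a' b \<Longrightarrow> a = a'"
  by (auto simp: adj_conv_nth nth_eq_iff_index_eq)

definition lbig :: "'b::linorder list \<Rightarrow> 'b \<Rightarrow> bool" where
  "lbig s z \<longleftrightarrow> (\<forall>a. adj s a z \<longrightarrow> z < a)"
definition rbig :: "'b::linorder list \<Rightarrow> 'b \<Rightarrow> bool" where
  "rbig s z \<longleftrightarrow> (\<forall>b. adj s z b \<longrightarrow> z < b)"

definition des :: "'b::linorder list \<Rightarrow> nat" where
  "des s = card {j. Suc j < length s \<and> s ! Suc j < s ! j}"

definition PK :: "'b::linorder list \<Rightarrow> 'b set" where "PK s = {z \<in> set s. \<not> lbig s z \<and> \<not> rbig s z}"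
definition VL :: "'b::linorder list \<Rightarrow> 'b set" where "VL s = {z \<in> set s. lbig s z \<and> rbig s z}"
definition DA :: "'b::linorder list \<Rightarrow> 'b set" where "DA s = {z \<in> set s. \<not> lbig s z \<and> rbig s z}"
definition DD :: "'b::linorder list \<Rightarrow> 'b set" where "DD s = {z \<in> set s. lbig s z \<and> \<not> rbig s z}"

lemma distinct_Suc_neq: "distinct s \<Longrightarrow> Suc j < length s \<Longrightarrow> s ! Suc j \<noteq> s ! j"
  by (simp add: nth_eq_iff_index_eq)

lemma des_R:
  assumes "distinct s"
  shows "des s = card {z \<in> set s. \<not> rbig s z}"
proof -
  have "{z \<in> set s. \<not> rbig s z} = (\<lambda>j. s ! j) ` {j. Suc j < length s \<and> s ! Suc j < s ! j}"
    using assms by (auto simp: rbig_def adj_conv_nth not_less nth_eq_iff_index_eq intro!: image_eqI) (metis nth_mem Suc_lessD not_less distinct_Suc_neq order.not_eq_order_implies_strict)+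
  moreover have "inj_on (\<lambda>j. s ! j) {j. Suc j < length s \<and> s ! Suc j < s ! j}"
    using assms by (auto simp: inj_on_def nth_eq_iff_index_eq)
  ultimately show ?thesis by (simp add: des_def card_image)
qed

lemma des_L:
  assumes "distinct s" "s \<noteq> []"
  shows "Suc (des s) = card {z \<in> set s. lbig s z}"
proof -
  let ?D = "{j. Suc j < length s \<and> s ! Suc j < s ! j}"
  have hd: "hd s = s ! 0" using assms by (simp add: hd_conv_nth)
  have "{z \<in> set s. lbig s z} = insert (hd s) ((\<lambda>j. s ! Suc j) ` ?D)"
  proof (intro set_eqI iffI)
    fix z assume z: "z \<in> {z \<in> set s. lbig s z}"
    then obtain k where k: "k < length s" "z = s ! k" by (auto simp: in_set_conv_nth)
    show "z \<in> insert (hd s) ((\<lambda>j. s ! Suc j) ` ?D)"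
    proof (cases k)
      case 0 then show ?thesis using k hd by simp
    next
      case (Suc j)
      then have "adj s (s ! j) z" using k by (auto simp: adj_conv_nth)
      then have "z < s ! j" using z by (auto simp: lbig_def)
      then show ?thesis using k Suc by auto
    qed
  next
    fix z assume z: "z \<in> insert (hd s) ((\<lambda>j. s ! Suc j) ` ?D)"
    show "z \<in> {z \<in> set s. lbig s z}"
    proof (cases "z = hd s")
      case True
      have "\<not> adj s a z" for a
      proof
        assume "adj s a z"
        then obtain j where "Suc j < length s" "s ! Suc j = s ! 0" using True hd by (auto simp: adj_conv_nth)
        then show False using assms by (simp add: nth_eq_iff_index_eq)
      qed
      then show ?thesis using True assms by (auto simp: lbig_def)
    next
      case False
      then obtain j where j: "Suc j < length s" "s ! Suc j < s ! j" "z = s ! Suc j" using z by auto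
      have "a = s ! j" if "adj s a z" for a
        using adj_uniq_l[OF assms(1) that, of "s ! j"] j by (auto simp: adj_conv_nth)
      then show ?thesis using j by (auto simp: lbig_def)
    qed
  qed
  moreover have "hd s \<notin> (\<lambda>j. s ! Suc j) ` ?D"
    using assms hd by (auto simp: nth_eq_iff_index_eq)
  moreover have "inj_on (\<lambda>j. s ! Suc j) ?D"
    using assms by (auto simp: inj_on_def nth_eq_iff_index_eq)
  moreover have "finite ?D" by (rule finite_subset[of _ "{..<length s}"]) auto
  ultimately show ?thesis by (simp add: des_def card_image card_insert_disjoint)
qed

lemma counts:
  assumes "distinct s" "s \<noteq> []"
  shows "card (DD s) + card (PK s) = des s" "card (DA s) + card (PK s) + des s + 1 = length s"
proof -
  have f: "finite (set s)" by simp
  have R: "{z \<in> set s. \<not> rbig s z} = PK s \<union> DD s" "PK s \<inter> DD s = {}"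
    by (auto simp: PK_def DD_def)
  have L: "{z \<in> set s. lbig s z} = VL s \<union> DD s" "VL s \<inter> DD s = {}"
    by (auto simp: VL_def DD_def)
  have fin: "finite (PK s)" "finite (DD s)" "finite (VL s)" "finite (DA s)"
    by (auto simp: PK_def DD_def VL_def DA_def)
  have 1: "des s = card (PK s) + card (DD s)"
    using des_R[OF assms(1)] R fin by (simp add: card_Un_disjoint)
  have 2: "Suc (des s) = card (VL s) + card (DD s)"
    using des_L[OF assms] L fin by (simp add: card_Un_disjoint)
  have S: "set s = (PK s \<union> VL s) \<union> (DA s \<union> DD s)"
    by (auto simp: PK_def DD_def VL_def DA_def)
  have "length s = card (set s)" using assms by (simp add: distinct_card)
  also have "\<dots> = card (PK s \<union> VL s) + card (DA s \<union> DD s)"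
    unfolding S using fin by (intro card_Un_disjoint) (auto simp: PK_def DD_def VL_def DA_def)
  also have "\<dots> = card (PK s) + card (VL s) + (card (DA s) + card (DD s))"
    using fin by (subst card_Un_disjoint, auto simp: PK_def DD_def VL_def DA_def)+
  finally show "card (DD s) + card (PK s) = des s" "card (DA s) + card (PK s) + des s + 1 = length s"
    using 1 2 by simp_all
qed

definition HOP :: "'b::linorder list \<Rightarrow> 'b \<Rightarrow> 'b list \<Rightarrow> bool" where
  "HOP s y t \<longleftrightarrow> (\<exists>A B C. s = A @ B @ y # C \<and> t = A @ y # B @ C \<and> B \<noteq> [] \<and>
     (\<forall>b\<in>set B. b < y) \<and> (A = [] \<or> y < last A) \<and> (C = [] \<or> y < hd C))"

lemma adj_t: "B \<noteq> [] \<Longrightarrow> adj (A @ y # B @ C) a z \<longleftrightarrow> adj A a z \<or> (A\<noteq>[] \<and> a = last A \<and> z = y) \<or> (a = y \<and> z = hd B)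
   \<or> adj B a z \<or> (C \<noteq> [] \<and> a = last B \<and> z = hd C) \<or> adj C a z"
  by (simp add: adj_append adj_Cons) blast

lemma adj_s: "B \<noteq> [] \<Longrightarrow> adj (A @ B @ y # C) a z \<longleftrightarrow> adj A a z \<or> (A\<noteq>[] \<and> a = last A \<and> z = hd B) \<or> adj B a z
   \<or> (a = last B \<and> z = y) \<or> (C \<noteq> [] \<and> a = y \<and> z = hd C) \<or> adj C a z"
  by (simp add: adj_append adj_Cons) blast

lemma adj_hd: "distinct B \<Longrightarrow> \<not> adj B a (hd B)"
  by (cases B) (auto simp: adj_conv_nth nth_eq_iff_index_eq)

lemma adj_last: "distinct B \<Longrightarrow> \<not> adj B (last B) b"
  by (cases B rule: rev_cases) (auto simp: adj_conv_nth nth_eq_iff_index_eq nth_append split: if_splits)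

lemma hop_status:
  fixes y :: "'b::linorder"
  assumes s: "s = A @ B @ y # C" and t: "t = A @ y # B @ C" and B: "B \<noteq> []" "\<forall>b\<in>set B. b < y"
    and A: "A = [] \<or> y < last A" and C: "C = [] \<or> y < hd C" and d: "distinct s"
  shows "z \<noteq> y \<Longrightarrow> lbig t z = lbig s z"
    and "z \<noteq> y \<Longrightarrow> rbig t z = rbig s z"
    and "lbig t y" "\<not> rbig t y" "\<not> lbig s y" "rbig s y"
proof -
  have hB: "hd B < y" "last B < y" using B by auto
  have dd: "distinct A" "distinct B" "distinct C" "y \<notin> set A" "y \<notin> set B" "y \<notin> set C"
    "set A \<inter> set B = {}" "set A \<inter> set C = {}" "set B \<inter> set C = {}"
    using d s by auto
  have lA: "A \<noteq> [] \<Longrightarrow> last A \<in> set A" and hC: "C \<noteq> [] \<Longrightarrow> hd C \<in> set C"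
    and hB': "hd B \<in> set B" "last B \<in> set B" using B by auto
  note nA = adj_set[of A] and nB = adj_set[of B] and nC = adj_set[of C]
  note h1 = adj_hd[OF dd(2)] and l1 = adj_last[OF dd(2)]
  show "lbig t z = lbig s z" if zy: "z \<noteq> y"
  proof -
    consider "z = hd B" | "C \<noteq> [] \<and> z = hd C" | "z \<noteq> hd B" "C = [] \<or> z \<noteq> hd C" by blast
    then show ?thesis
    proof cases
      case 1
      have "lbig t z" unfolding lbig_def t adj_t[OF B(1)]
        using 1 hB hB' dd nA nC h1 hC by (metis disjoint_iff)
      moreover have "lbig s z" unfolding lbig_def s adj_s[OF B(1)]
        using 1 hB hB' dd nA nC h1 A by (metis disjoint_iff less_trans)
      ultimately show ?thesis by simp
    next
      case 2
      have "\<not> lbig t z" unfolding lbig_def t adj_t[OF B(1)]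
        using 2 hB C by (metis less_trans not_less_iff_gr_or_eq)
      moreover have "\<not> lbig s z" unfolding lbig_def s adj_s[OF B(1)]
        using 2 C by (metis less_not_sym)
      ultimately show ?thesis by simp
    next
      case 3
      have "adj t a z \<longleftrightarrow> adj s a z" for a
        unfolding t s adj_t[OF B(1)] adj_s[OF B(1)] using 3 zy by blast
      then show ?thesis by (simp add: lbig_def)
    qed
  qed
  show "rbig t z = rbig s z" if zy: "z \<noteq> y"
  proof -
    consider "A \<noteq> [] \<and> z = last A" | "z = last B" | "A = [] \<or> z \<noteq> last A" "z \<noteq> last B" by blast
    then show ?thesis
    proof cases
      case 1
      have "\<not> rbig t z" unfolding rbig_def t adj_t[OF B(1)]
        using 1 A by (metis less_not_sym)
      moreover have "\<not> rbig s z" unfolding rbig_def s adj_s[OF B(1)]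
        using 1 A hB by (metis less_trans less_not_sym)
      ultimately show ?thesis by simp
    next
      case 2
      have "rbig t z" unfolding rbig_def t adj_t[OF B(1)]
        using 2 hB hB' dd nA nC l1 C lA by (metis disjoint_iff less_trans)
      moreover have "rbig s z" unfolding rbig_def s adj_s[OF B(1)]
        using 2 hB hB' dd nA nC l1 lA by (metis disjoint_iff)
      ultimately show ?thesis by simp
    next
      case 3
      have "adj t z b \<longleftrightarrow> adj s z b" for b
        unfolding t s adj_t[OF B(1)] adj_s[OF B(1)] using 3 zy by blast
      then show ?thesis by (simp add: rbig_def)
    qed
  qed
  show "lbig t y" unfolding lbig_def t adj_t[OF B(1)]
    using A dd nA nB nC hB' hC by (metis)
  show "\<not> rbig t y" unfolding rbig_def t adj_t[OF B(1)]
    using hB by (metis less_not_sym)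
  show "\<not> lbig s y" unfolding lbig_def s adj_s[OF B(1)]
    using hB by (metis less_not_sym)
  show "rbig s y" unfolding rbig_def s adj_s[OF B(1)]
    using C dd nA nB nC hB' lA by (metis)
qed


lemma adj_left_neq: "distinct s \<Longrightarrow> adj s a y \<Longrightarrow> a \<noteq> y"
  by (auto simp: adj_conv_nth nth_eq_iff_index_eq)

lemma hop_exists:
  fixes s :: "'b::linorder list"
  assumes d: "distinct s" and y: "y \<in> DA s"
  shows "\<exists>t. HOP s y t"
proof -
  from y have ys: "y \<in> set s" and nl: "\<not> lbig s y" and rb: "rbig s y" by (auto simp: DA_def)
  from nl obtain a where a: "adj s a y" "\<not> y < a" by (auto simp: lbig_def)
  have ay: "a < y" using a adj_left_neq[OF d a(1)] by auto
  from ys obtain P C where s: "s = P @ y # C" by (meson split_list)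
  have yP: "y \<notin> set P" and yC: "y \<notin> set C" using d s by auto
  have "P \<noteq> [] \<and> a = last P"
  proof -
    have "adj P a y \<or> adj (y # C) a y \<or> (P \<noteq> [] \<and> a = last P \<and> y = hd (y # C))"
      using a(1) s by (simp add: adj_append)
    moreover have "\<not> adj P a y" using yP adj_set by fastforce
    moreover have "\<not> adj (y # C) a y" using yC adj_set ay by (fastforce simp: adj_Cons)
    ultimately show ?thesis by auto
  qed
  then have P: "P \<noteq> []" "last P < y" using ay by auto
  have C: "C = [] \<or> y < hd C"
  proof (cases C)
    case (Cons c C')
    have "adj s y c" using s Cons by (simp add: adj_append)
    then show ?thesis using rb Cons by (auto simp: rbig_def)
  qed simp
  define B where "B = rev (takeWhile (\<lambda>z. z < y) (rev P))"
  define A where "A = rev (dropWhile (\<lambda>z. z < y) (rev P))"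
  have PAB: "P = A @ B" unfolding A_def B_def
    by (metis rev_append rev_rev_ident takeWhile_dropWhile_id)
  have Bne: "B \<noteq> []" using P unfolding B_def
    by (cases "rev P") (auto simp: last_rev)
  have Blt: "\<forall>b\<in>set B. b < y" unfolding B_def by (auto dest: set_takeWhileD)
  have Alast: "A = [] \<or> y < last A"
  proof (cases "dropWhile (\<lambda>z. z < y) (rev P) = []")
    case True then show ?thesis by (simp add: A_def)
  next
    case False
    have "last A = hd (dropWhile (\<lambda>z. z < y) (rev P))" unfolding A_def using False by (simp add: last_rev)
    moreover have "\<not> hd (dropWhile (\<lambda>z. z < y) (rev P)) < y" using False hd_dropWhile by metis
    moreover have "hd (dropWhile (\<lambda>z. z < y) (rev P)) \<in> set P" using False
      by (metis list.set_sel(1) set_dropWhileD set_rev)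
    ultimately show ?thesis using yP by (metis linorder_neqE)
  qed
  show ?thesis unfolding HOP_def
    by (rule exI[of _ "A @ y # B @ C"], rule exI[of _ A], rule exI[of _ B], rule exI[of _ C])
       (use s PAB Bne Blt Alast C in auto)
qed

lemma HOP_basic:
  assumes "HOP s y t" "distinct s"
  shows "distinct t" "length t = length s" "set t = set s"
  using assms by (auto simp: HOP_def)

lemma HOP_stats:
  assumes h: "HOP s y t" and d: "distinct s"
  shows "DD t = insert y (DD s)" "y \<notin> DD s" "PK t = PK s" "des t = Suc (des s)" "y \<in> DA s"
proof -
  obtain A B C where s: "s = A @ B @ y # C" and t: "t = A @ y # B @ C" and B: "B \<noteq> []" "\<forall>b\<in>set B. b < y"
    and A: "A = [] \<or> y < last A" and C: "C = [] \<or> y < hd C" using h by (auto simp: HOP_def)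
  note st = hop_status[OF s t B A C d]
  have set: "set t = set s" using s t by auto
  have ys: "y \<in> set s" using s by auto
  have eq: "\<And>z. z \<noteq> y \<Longrightarrow> (lbig t z \<and> \<not> rbig t z) = (lbig s z \<and> \<not> rbig s z)" using st by simp
  show "DD t = insert y (DD s)" unfolding DD_def set
  proof (rule set_eqI)
    fix z show "z \<in> {z \<in> set s. lbig t z \<and> \<not> rbig t z} \<longleftrightarrow> z \<in> insert y {z \<in> set s. lbig s z \<and> \<not> rbig s z}"
      by (cases "z = y") (use eq st ys in auto)
  qed
  show "y \<notin> DD s" unfolding DD_def using st by auto
  show "y \<in> DA s" unfolding DA_def using st ys by auto
  show "PK t = PK s" unfolding PK_def set using st by (metis)
  have e: "{z \<in> set t. \<not> rbig t z} = insert y {z \<in> set s. \<not> rbig s z}" unfolding set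
  proof (rule set_eqI)
    fix z show "z \<in> {z \<in> set s. \<not> rbig t z} \<longleftrightarrow> z \<in> insert y {z \<in> set s. \<not> rbig s z}"
      by (cases "z = y") (use st ys in auto)
  qed
  have n: "y \<notin> {z \<in> set s. \<not> rbig s z}" using st by auto
  have dt: "distinct t" using HOP_basic[OF h d] by simp
  have "des t = card {z \<in> set t. \<not> rbig t z}" by (rule des_R[OF dt])
  also have "\<dots> = Suc (card {z \<in> set s. \<not> rbig s z})" unfolding e
    by (rule card_insert_disjoint) (use n in auto)
  also have "\<dots> = Suc (des s)" using des_R[OF d] by simp
  finally show "des t = Suc (des s)" .
qed

lemma HOP_inj:
  assumes h1: "HOP s1 y t" and h2: "HOP s2 y t" and d: "distinct t"
  shows "s1 = s2"
proof -
  obtain A B C where s: "s1 = A @ B @ y # C" and t: "t = A @ y # B @ C" and B: "\<forall>b\<in>set B. b < y"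
     and C: "C = [] \<or> y < hd C" using h1 by (auto simp: HOP_def)
  obtain A' B' C' where s': "s2 = A' @ B' @ y # C'" and t': "t = A' @ y # B' @ C'" and B': "\<forall>b\<in>set B'. b < y"
     and C': "C' = [] \<or> y < hd C'" using h2 by (auto simp: HOP_def)
  have "y \<notin> set A" "y \<notin> set (B @ C)" using d t by auto
  moreover have "y \<notin> set A'" using d t' by auto
  ultimately have AA: "A = A'" and BC: "B @ C = B' @ C'" using t t' append_Cons_eq_iff by metis+
  have tw: "takeWhile (\<lambda>z. z < y) (X @ Y) = X" if "\<forall>b\<in>set X. b < y" "Y = [] \<or> y < hd Y" for X Y
  proof (cases Y)
    case Nil then show ?thesis using that by (simp add: takeWhile_append2)
  next
    case (Cons a l)
    then have "\<not> a < y" using that(2) by (metis less_asym list.distinct(1) list.sel(1))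
    then show ?thesis using that(1) Cons by (simp add: takeWhile_append2)
  qed
  have "B = B'" using tw[OF B C] tw[OF B' C'] BC by metis
  then have "C = C'" using BC by simp
  show ?thesis using s s' AA \<open>B = B'\<close> \<open>C = C'\<close> by simp
qed

definition swapclosed :: "'b::linorder list set \<Rightarrow> bool" where
  "swapclosed V \<longleftrightarrow> (\<forall>us a b vs. us @ a # b # vs \<in> V \<longrightarrow> a < b \<longrightarrow> us @ b # a # vs \<in> V)"

lemma HOP_closed_aux:
  assumes "swapclosed V"
  shows "\<forall>b\<in>set B. b < y \<Longrightarrow> A @ B @ y # C \<in> V \<Longrightarrow> A @ y # B @ C \<in> V"
proof (induction B arbitrary: A)
  case Nil then show ?case by simp
next
  case (Cons b B')
  have "(A @ [b]) @ y # B' @ C \<in> V" using Cons.IH[of "A @ [b]"] Cons.prems by simp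
  then have "A @ b # y # (B' @ C) \<in> V" by simp
  then show ?case using assms Cons.prems(1) unfolding swapclosed_def by fastforce
qed

lemma HOP_closed: "swapclosed V \<Longrightarrow> s \<in> V \<Longrightarrow> HOP s y t \<Longrightarrow> t \<in> V"
  unfolding HOP_def using HOP_closed_aux by blast


definition Lv :: "'b::linorder list set \<Rightarrow> nat \<Rightarrow> nat \<Rightarrow> 'b list set" where
  "Lv V k d = {s \<in> V. card (PK s) = k \<and> des s = d}"

lemma finite_stats: "finite (PK s)" "finite (DA s)" "finite (DD s)"
  by (auto simp: PK_def DA_def DD_def)

lemma dc:
  fixes V :: "'b::linorder list set"
  assumes fin: "finite V" and wf: "\<forall>s\<in>V. distinct s \<and> length s = n" and n: "n > 0" and sc: "swapclosed V"
  shows "card (Lv V k d) * (n - 1 - k - d) \<le> card (Lv V k (Suc d)) * (Suc d - k)"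
proof -
  define X where "X = Sigma (Lv V k d) DA"
  define Y where "Y = Sigma (Lv V k (Suc d)) DD"
  have finL: "finite (Lv V k d')" for d' using fin by (simp add: Lv_def)
  have ne: "s \<noteq> []" if "s \<in> V" for s using wf that n by auto
  have "card X = (\<Sum>s\<in>Lv V k d. card (DA s))" unfolding X_def
    using finL finite_stats by (intro card_SigmaI) auto
  also have "\<dots> = (\<Sum>s\<in>Lv V k d. n - 1 - k - d)"
  proof (rule sum.cong)
    fix s assume s: "s \<in> Lv V k d"
    then have "s \<in> V" "card (PK s) = k" "des s = d" by (auto simp: Lv_def)
    then show "card (DA s) = n - 1 - k - d" using counts(2)[of s] wf ne by auto
  qed simp
  finally have cX: "card X = card (Lv V k d) * (n - 1 - k - d)" by simp
  have "card Y = (\<Sum>s\<in>Lv V k (Suc d). card (DD s))" unfolding Y_def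
    using finL finite_stats by (intro card_SigmaI) auto
  also have "\<dots> = (\<Sum>s\<in>Lv V k (Suc d). Suc d - k)"
  proof (rule sum.cong)
    fix s assume s: "s \<in> Lv V k (Suc d)"
    then have "s \<in> V" "card (PK s) = k" "des s = Suc d" by (auto simp: Lv_def)
    then show "card (DD s) = Suc d - k" using counts(1)[of s] wf ne by auto
  qed simp
  finally have cY: "card Y = card (Lv V k (Suc d)) * (Suc d - k)" by simp
  define f :: "'b list \<times> 'b \<Rightarrow> 'b list \<times> 'b" where "f = (\<lambda>(s, y). (SOME t. HOP s y t, y))"
  have fh: "HOP s y (fst (f (s, y)))" "snd (f (s, y)) = y" if "(s, y) \<in> X" for s y
  proof -
    from that have "s \<in> V" "y \<in> DA s" by (auto simp: X_def Lv_def)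
    then have "\<exists>t. HOP s y t" using hop_exists wf by blast
    then show "HOP s y (fst (f (s, y)))" "snd (f (s, y)) = y" unfolding f_def by (auto intro: someI_ex)
  qed
  have "inj_on f X"
  proof (rule inj_onI)
    fix p q assume p: "p \<in> X" and q: "q \<in> X" and e: "f p = f q"
    obtain s y where ps: "p = (s, y)" by (cases p)
    obtain s' y' where qs: "q = (s', y')" by (cases q)
    have yy: "y = y'" using fh(2)[of s y] fh(2)[of s' y'] p q e ps qs by metis
    have h1: "HOP s y (fst (f p))" using fh p ps by simp
    have h2: "HOP s' y (fst (f p))" using fh q qs e yy by simp
    have "distinct s" using p ps wf by (auto simp: X_def Lv_def)
    then have "distinct (fst (f p))" using HOP_basic(1)[OF h1] by simp
    then have "s = s'" using HOP_inj[OF h1 h2] by simp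
    then show "p = q" using ps qs yy by simp
  qed
  moreover have "f ` X \<subseteq> Y"
  proof
    fix q assume "q \<in> f ` X"
    then obtain s y where p: "(s, y) \<in> X" and q: "q = f (s, y)" by auto
    have h: "HOP s y (fst q)" and sq: "snd q = y" using fh[OF p] q by auto
    have sV: "s \<in> V" and k: "card (PK s) = k" and dd: "des s = d" using p by (auto simp: X_def Lv_def)
    have ds: "distinct s" using sV wf by auto
    note st = HOP_stats[OF h ds]
    have "fst q \<in> V" using HOP_closed[OF sc sV h] .
    moreover have "y \<in> DD (fst q)" using st by simp
    ultimately show "q \<in> Y" unfolding Y_def Lv_def using st k dd sq
      by (metis (mono_tags, lifting) SigmaI mem_Collect_eq prod.collapse)
  qed
  moreover have "finite Y" unfolding Y_def using finL finite_stats by (intro finite_SigmaI) auto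
  ultimately have "card X \<le> card Y" by (intro card_inj_on_le)
  then show ?thesis using cX cY by simp
qed

lemma binom_step: "(m choose Suc e) * Suc e = (m choose e) * (m - e)"
  by (metis binomial_absorb_comp binomial_absorption mult.commute)

lemma bchain:
  fixes b :: "nat \<Rightarrow> nat"
  assumes h: "\<And>e. b e * (m - e) \<le> b (Suc e) * Suc e" and ee: "e \<le> e'" and em: "e' \<le> m"
  shows "b e * (m choose e') \<le> b e' * (m choose e)"
  using ee em
proof (induction e' rule: dec_induct)
  case base then show ?case by simp
next
  case (step e')
  have "b e * (m choose Suc e') * Suc e' = b e * (m choose e') * (m - e')"
    using binom_step[of m e'] by (metis mult.assoc)
  also have "\<dots> \<le> b e' * (m choose e) * (m - e')"
    using step by (intro mult_right_mono) auto
  also have "\<dots> = (b e' * (m - e')) * (m choose e)" by (simp add: algebra_simps)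
  also have "\<dots> \<le> (b (Suc e') * Suc e') * (m choose e)"
    using h by (intro mult_right_mono) auto
  finally have "b e * (m choose Suc e') * Suc e' \<le> b (Suc e') * (m choose e) * Suc e'"
    by (simp add: algebra_simps)
  then show ?case by (meson mult_le_cancel2 zero_less_Suc)
qed

lemma bsym:
  fixes b :: "nat \<Rightarrow> nat"
  assumes h: "\<And>e. b e * (m - e) \<le> b (Suc e) * Suc e" and e: "e0 \<le> m - e0"
  shows "b e0 \<le> b (m - e0)"
proof (cases "e0 \<le> m")
  case True
  have "b e0 * (m choose (m - e0)) \<le> b (m - e0) * (m choose e0)"
    using bchain[OF h e] by simp
  moreover have "(m choose (m - e0)) = (m choose e0)" using True binomial_symmetric by metis
  moreover have "(m choose e0) > 0" using True by simp
  ultimately show ?thesis by simp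
next
  case False then show ?thesis using e by simp
qed

theorem perm_ineq:
  fixes V :: "'b::linorder list set"
  assumes fin: "finite V" and wf: "\<forall>s\<in>V. distinct s \<and> length s = n" and sc: "swapclosed V"
    and i: "1 \<le> i" "2 * i < n"
  shows "card {s\<in>V. des s = i - 1} \<le> card {s\<in>V. des s = i}
       \<and> card {s\<in>V. des s = i} \<le> card {s\<in>V. des s = n - 1 - i}"
proof -
  have n: "n > 0" using i by simp
  define K where "K = (\<lambda>s. card (PK s)) ` V"
  have finK: "finite K" using fin by (simp add: K_def)
  have hsum: "card {s\<in>V. des s = d} = (\<Sum>k\<in>K. card (Lv V k d))" for d
  proof -
    have "(\<Sum>k\<in>K. card {x \<in> {s\<in>V. des s = d}. card (PK x) = k}) = card {s\<in>V. des s = d}"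
      using sum.group[of "{s\<in>V. des s = d}" K "\<lambda>s. card (PK s)" "\<lambda>_. 1::nat"] fin finK
      by (auto simp: K_def)
    moreover have "{x \<in> {s\<in>V. des s = d}. card (PK x) = k} = Lv V k d" for k
      by (auto simp: Lv_def)
    ultimately show ?thesis by simp
  qed
  have ne: "s \<noteq> []" if "s \<in> V" for s using wf that n by auto
  have lvinfo: "k \<le> d \<and> k + d + 1 \<le> n" if ne0: "Lv V k d \<noteq> {}" for k d
  proof -
    obtain s where s: "s \<in> V" "card (PK s) = k" "des s = d" using ne0 unfolding Lv_def by blast
    then show ?thesis using counts[of s] wf ne by fastforce
  qed
  have dc': "card (Lv V k d) * (n - 1 - k - d) \<le> card (Lv V k (Suc d)) * (Suc d - k)" for k d
    using dc[OF fin wf n sc] .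
  have one: "card (Lv V k (i - 1)) \<le> card (Lv V k i)" for k
  proof (cases "Lv V k (i - 1) = {}")
    case True then show ?thesis by simp
  next
    case False
    then have kd: "k \<le> i - 1" using lvinfo by blast
    have "card (Lv V k (i - 1)) * (i - k) \<le> card (Lv V k (i - 1)) * (n - 1 - k - (i - 1))"
      using kd i by (intro mult_left_mono) auto
    also have "\<dots> \<le> card (Lv V k i) * (i - k)" using dc'[of k "i - 1"] i by simp
    finally have "card (Lv V k (i - 1)) * (i - k) \<le> card (Lv V k i) * (i - k)" .
    moreover have "0 < i - k" using kd i by simp
    ultimately show ?thesis by simp
  qed
  have two: "card (Lv V k i) \<le> card (Lv V k (n - 1 - i))" for k
  proof (cases "Lv V k i = {}")
    case True then show ?thesis by simp
  next
    case False
    then have kd: "k \<le> i" "k + i + 1 \<le> n" using lvinfo by blast+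
    define m where "m = n - 1 - 2 * k"
    define b where "b e = card (Lv V k (k + e))" for e
    have h: "b e * (m - e) \<le> b (Suc e) * Suc e" for e
      using dc'[of k "k + e"] unfolding b_def m_def by (simp add: algebra_simps)
    have "b (i - k) \<le> b (m - (i - k))" by (rule bsym[OF h]) (use kd i in \<open>simp add: m_def\<close>)
    moreover have "k + (i - k) = i" using kd by simp
    moreover have "k + (m - (i - k)) = n - 1 - i" using kd i by (simp add: m_def)
    ultimately show ?thesis unfolding b_def by simp
  qed
  show ?thesis unfolding hsum using one two by (simp add: sum_mono)
qed



lemma pow_sum: "finite E \<Longrightarrow> (\<Sum>X\<in>Pow E. (y::'b::comm_semiring_1) ^ card X) = (y + 1) ^ card E"
proof -
  assume E: "finite E"
  have "(\<Prod>x\<in>E. y + 1) = (\<Sum>X\<in>Pow E. prod (\<lambda>_. y) X * prod (\<lambda>_. 1) (E - X))"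
    by (rule prod_add[OF E])
  then show ?thesis by simp
qed

lemma subsets_sum:
  assumes C: "finite C" and D: "D \<subseteq> C"
  shows "(\<Sum>P\<in>{P. D \<subseteq> P \<and> P \<subseteq> C}. (y::'b::comm_semiring_1) ^ (card C - card P)) = (y + 1) ^ (card C - card D)"
proof -
  have "(\<Sum>P\<in>{P. D \<subseteq> P \<and> P \<subseteq> C}. y ^ (card C - card P)) = (\<Sum>X\<in>Pow (C - D). y ^ card X)"
  proof (rule sum.reindex_bij_witness[of _ "\<lambda>X. C - X" "\<lambda>P. C - P"])
    fix P assume P: "P \<in> {P. D \<subseteq> P \<and> P \<subseteq> C}"
    then show "C - (C - P) = P" "C - P \<in> Pow (C - D)" by auto
    have "finite P" using P C finite_subset by blast
    then show "y ^ card (C - P) = y ^ (card C - card P)" using P by (simp add: card_Diff_subset)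
  next
    fix X assume "X \<in> Pow (C - D)"
    then show "C - (C - X) = X" "C - X \<in> {P. D \<subseteq> P \<and> P \<subseteq> C}" using D by auto
  qed
  also have "\<dots> = (y + 1) ^ card (C - D)" using C by (intro pow_sum) simp
  also have "card (C - D) = card C - card D" using C D by (simp add: card_Diff_subset finite_subset)
  finally show ?thesis .
qed

locale geo =
  fixes \<rho> :: "'a::{finite,bounded_lattice} \<Rightarrow> nat" and r :: nat and idx :: "'a \<Rightarrow> nat"
  assumes geom: "geometric_lattice \<rho>" and rtop: "\<rho> top = r + 1" and inj: "inj idx"
begin

lemma rbot: "\<rho> bot = 0" and rcov: "covers x y \<Longrightarrow> \<rho> y = \<rho> x + 1"
  and semimod: "\<rho> (sup x y) + \<rho> (inf x y) \<le> \<rho> x + \<rho> y"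
  and atomic: "\<exists>A. A \<subseteq> atoms \<and> finite A \<and> x = Sup_fin (insert bot A)"
  using geom by (auto simp: geometric_lattice_def graded_rank_def atomic_lattice_def)

lemma cover_exists:
  fixes x y :: 'a
  assumes "x < y" shows "\<exists>z. covers x z \<and> z \<le> y"
proof -
  have "finite {z. x < z \<and> z \<le> y}" "{z. x < z \<and> z \<le> y} \<noteq> {}" using assms by auto
  then obtain m where m: "m \<in> {z. x < z \<and> z \<le> y}" "\<forall>b\<in>{z. x < z \<and> z \<le> y}. b \<le> m \<longrightarrow> m = b"
    using finite_has_minimal by blast
  have "covers x m" unfolding covers_def
  proof (intro conjI notI)
    show "x < m" using m by auto
    assume "\<exists>z. x < z \<and> z < m"
    then obtain z where "x < z" "z < m" by blast
    moreover have "z \<in> {z. x < z \<and> z \<le> y}" using m(1) \<open>x < z\<close> \<open>z < m\<close> by auto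
    ultimately show False using m(2) by (metis less_le)
  qed
  then show ?thesis using m by auto
qed

lemma rank_strict_aux: "\<forall>x::'a. card {z. x < z \<and> z \<le> y} = n \<longrightarrow> x < y \<longrightarrow> \<rho> x < \<rho> y"
proof (induction n rule: less_induct)
  case (less n)
  show ?case
  proof (intro allI impI)
    fix x :: 'a assume n: "card {z. x < z \<and> z \<le> y} = n" and xy: "x < y"
    obtain z where z: "covers x z" "z \<le> y" using cover_exists[OF xy] by blast
    have rz: "\<rho> z = \<rho> x + 1" using rcov[OF z(1)] .
    show "\<rho> x < \<rho> y"
    proof (cases "z = y")
      case True then show ?thesis using rz by simp
    next
      case False
      then have zy: "z < y" using z by (simp add: less_le)
      have xz: "x < z" using z(1) by (simp add: covers_def)
      have sub: "{w. z < w \<and> w \<le> y} \<subseteq> {w. x < w \<and> w \<le> y}"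
        using xz by (auto intro: less_trans)
      have zin: "z \<in> {w. x < w \<and> w \<le> y}" "z \<notin> {w. z < w \<and> w \<le> y}" using xz zy by auto
      have "card {w. z < w \<and> w \<le> y} < card {w. x < w \<and> w \<le> y}"
        by (rule psubset_card_mono) (simp, use sub zin in blast)
      then have "\<rho> z < \<rho> y" using less.IH n zy by blast
      then show ?thesis using rz by simp
    qed
  qed
qed

lemma rank_strict: "(x::'a) < y \<Longrightarrow> \<rho> x < \<rho> y"
  using rank_strict_aux by blast

lemma rank_mono: "x \<le> y \<Longrightarrow> \<rho> x \<le> \<rho> y"
  using rank_strict by (cases "x = y") (auto simp: less_le)

lemma rank_eq: "x \<le> y \<Longrightarrow> \<rho> x = \<rho> y \<Longrightarrow> x = y"
  using rank_strict by (metis less_le less_irrefl)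

lemma rank_cover: "x < y \<Longrightarrow> \<rho> y = Suc (\<rho> x) \<Longrightarrow> covers x y"
  unfolding covers_def using rank_strict by (metis Suc_le_eq leD)

lemma covers_less: "covers (x::'a) y \<Longrightarrow> x < y" by (simp add: covers_def)

lemma atom_rank: "a \<in> atoms \<Longrightarrow> \<rho> a = 1"
  using rcov rbot by (simp add: atoms_def)

lemma atom_inf: "(a::'a) \<in> atoms \<Longrightarrow> \<not> a \<le> z \<Longrightarrow> inf z a = bot"
proof -
  assume a: "a \<in> atoms" "\<not> a \<le> z"
  have "inf z a \<le> a" by simp
  moreover have "inf z a \<noteq> a" using a(2) by (metis inf.cobounded1)
  ultimately have "inf z a < a" by (simp add: less_le)
  moreover have "covers bot a" using a(1) by (simp add: atoms_def)
  ultimately have "\<not> (bot < inf z a)" unfolding covers_def by blast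
  then show ?thesis using bot.not_eq_extremum by blast
qed

lemma join_cover: "(a::'a) \<in> atoms \<Longrightarrow> \<not> a \<le> z \<Longrightarrow> covers z (sup z a)"
proof -
  assume a: "a \<in> atoms" "\<not> a \<le> z"
  have "\<rho> (sup z a) + \<rho> (inf z a) \<le> \<rho> z + \<rho> a" by (rule semimod)
  then have le: "\<rho> (sup z a) \<le> Suc (\<rho> z)" using atom_inf[OF a] atom_rank[OF a(1)] rbot by simp
  have lt: "z < sup z a" using a(2) by (simp add: less_le) (metis sup.orderI sup_commute)
  then have "\<rho> z < \<rho> (sup z a)" by (rule rank_strict)
  then show ?thesis using le lt rank_cover by (simp add: le_antisym)
qed

lemma atom_below: "(x::'a) < y \<Longrightarrow> \<exists>a\<in>atoms. a \<le> y \<and> \<not> a \<le> x"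
proof (rule ccontr)
  assume xy: "x < y" and n: "\<not> (\<exists>a\<in>atoms. a \<le> y \<and> \<not> a \<le> x)"
  obtain A where A: "A \<subseteq> atoms" "finite A" "y = Sup_fin (insert bot A)" using atomic by blast
  have "\<forall>a\<in>A. a \<le> y" using A by (metis Sup_fin.coboundedI finite_insert insertCI)
  then have "\<forall>a\<in>insert bot A. a \<le> x" using n A(1) by auto
  then have "y \<le> x" using A by (simp add: Sup_fin.bounded_iff)
  then show False using xy by simp
qed

lemma cover_meet: "covers (z::'a) u \<Longrightarrow> covers z v \<Longrightarrow> u \<noteq> v \<Longrightarrow> inf u v = z"
proof -
  assume u: "covers z u" and v: "covers z v" and uv: "u \<noteq> v"
  have zl: "z \<le> inf u v" using u v by (simp add: covers_def less_imp_le)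
  have "inf u v \<noteq> u"
  proof
    assume "inf u v = u"
    then have "u \<le> v" by (metis inf.absorb_iff1)
    moreover have "\<rho> u = \<rho> v" using rcov[OF u] rcov[OF v] by simp
    ultimately show False using uv rank_eq by blast
  qed
  then have "inf u v < u" by (simp add: less_le)
  then show ?thesis using zl u unfolding covers_def by (metis order.not_eq_order_implies_strict)
qed


definition lset :: "'a \<Rightarrow> 'a \<Rightarrow> 'a set" where
  "lset z w = {a \<in> atoms. a \<le> w \<and> \<not> a \<le> z}"

definition lab :: "'a \<Rightarrow> 'a \<Rightarrow> nat" where
  "lab z w = Min (idx ` lset z w)"

definition latom :: "'a \<Rightarrow> 'a \<Rightarrow> 'a" where
  "latom z w = inv idx (lab z w)"

lemma lab_props:
  assumes "z < w"
  shows "latom z w \<in> lset z w" "idx (latom z w) = lab z w" "\<And>b. b \<in> lset z w \<Longrightarrow> lab z w \<le> idx b"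
proof -
  have ne: "lset z w \<noteq> {}" using atom_below[OF assms] by (auto simp: lset_def)
  have "lab z w \<in> idx ` lset z w" unfolding lab_def using ne by (intro Min_in) auto
  then obtain a where a: "a \<in> lset z w" "idx a = lab z w" by auto
  have "latom z w = a" unfolding latom_def using a(2) inj by (metis inv_f_f)
  then show "latom z w \<in> lset z w" "idx (latom z w) = lab z w" using a by auto
  show "\<And>b. b \<in> lset z w \<Longrightarrow> lab z w \<le> idx b" unfolding lab_def by (intro Min_le) auto
qed

lemma lab_unique:
  assumes "a \<in> lset z w" "\<And>b. b \<in> lset z w \<Longrightarrow> idx a \<le> idx b"
  shows "lab z w = idx a" "latom z w = a"
proof -
  show l: "lab z w = idx a" unfolding lab_def using assms by (intro Min_eqI) auto
  show "latom z w = a" unfolding latom_def l using inj by (metis inv_f_f)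
qed

lemma cover_join_eq: "covers z w \<Longrightarrow> a \<in> lset z w \<Longrightarrow> w = sup z a"
proof -
  assume c: "covers z w" and a: "a \<in> lset z w"
  have "sup z a \<le> w" using a c by (auto simp: lset_def covers_def less_imp_le)
  moreover have "z < sup z a" using a by (auto simp: lset_def less_le) (metis sup.orderI sup_commute)
  ultimately show ?thesis using c unfolding covers_def by (metis order.not_eq_order_implies_strict)
qed

lemma lset_mono_w: "w \<le> w' \<Longrightarrow> lset z w \<subseteq> lset z w'"
  by (auto simp: lset_def)

lemma lset_mono_z: "z' \<le> z \<Longrightarrow> a \<in> lset z w \<Longrightarrow> a \<in> lset z' w"
  by (auto simp: lset_def intro: order_trans)

definition MC :: "'a list set" where
  "MC = {c. length c = r + 2 \<and> c ! 0 = bot \<and> c ! (r + 1) = top \<and> (\<forall>k\<le>r. covers (c ! k) (c ! Suc k))}"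

lemma finite_MC: "finite MC"
proof -
  have "MC \<subseteq> {xs. set xs \<subseteq> UNIV \<and> length xs = r + 2}" by (auto simp: MC_def)
  moreover have "finite {xs. set xs \<subseteq> (UNIV::'a set) \<and> length xs = r + 2}"
    by (rule finite_lists_length_eq) simp
  ultimately show ?thesis by (rule finite_subset)
qed

lemma MC_rank: "c \<in> MC \<Longrightarrow> k \<le> r + 1 \<Longrightarrow> \<rho> (c ! k) = k"
proof (induction k)
  case 0 then show ?case by (simp add: MC_def rbot)
next
  case (Suc k)
  then have "covers (c ! k) (c ! Suc k)" by (simp add: MC_def)
  then show ?case using Suc rcov by simp
qed

lemma MC_mono:
  assumes c: "c \<in> MC" and ij: "i \<le> j" and jr: "j \<le> r + 1" shows "c ! i \<le> c ! j"
  using ij jr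
proof (induction j rule: dec_induct)
  case base then show ?case by simp
next
  case (step j)
  then have "covers (c ! j) (c ! Suc j)" using c by (simp add: MC_def)
  then show ?case using step by (meson covers_less less_imp_le order_trans Suc_leD)
qed

lemma MC_cover: "c \<in> MC \<Longrightarrow> k \<le> r \<Longrightarrow> covers (c ! k) (c ! Suc k)"
  by (simp add: MC_def)

definition labs :: "'a list \<Rightarrow> nat list" where
  "labs c = map (\<lambda>k. lab (c ! k) (c ! Suc k)) [0..<r+1]"

lemma labs_nth: "k \<le> r \<Longrightarrow> labs c ! k = lab (c ! k) (c ! Suc k)"
  by (simp add: labs_def nth_append less_Suc_eq_le del: upt_Suc)

lemma length_labs: "length (labs c) = r + 1" by (simp add: labs_def)

lemma MC_lab: "c \<in> MC \<Longrightarrow> k \<le> r \<Longrightarrow> latom (c ! k) (c ! Suc k) \<in> lset (c ! k) (c ! Suc k) \<and>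
   idx (latom (c ! k) (c ! Suc k)) = lab (c ! k) (c ! Suc k) \<and> c ! Suc k = sup (c ! k) (latom (c ! k) (c ! Suc k))"
  using lab_props[OF covers_less[OF MC_cover]] cover_join_eq[OF MC_cover] by blast

lemma distinct_labs: "c \<in> MC \<Longrightarrow> distinct (labs c)"
proof -
  assume c: "c \<in> MC"
  have ne: "labs c ! i \<noteq> labs c ! j" if ij: "i < j" "j \<le> r" for i j
  proof -
    let ?a = "latom (c ! i) (c ! Suc i)" and ?b = "latom (c ! j) (c ! Suc j)"
    have "?a \<le> c ! Suc i" using MC_lab[OF c, of i] ij by (simp add: lset_def)
    also have "\<dots> \<le> c ! j" using MC_mono[OF c, of "Suc i" j] ij by simp
    finally have "?a \<le> c ! j" .
    moreover have "\<not> ?b \<le> c ! j" using MC_lab[OF c, of j] ij by (simp add: lset_def)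
    ultimately have "?a \<noteq> ?b" by auto
    then have "idx ?a \<noteq> idx ?b" using inj by (meson injD)
    then show ?thesis using MC_lab[OF c, of i] MC_lab[OF c, of j] ij by (simp add: labs_nth)
  qed
  show ?thesis unfolding distinct_conv_nth length_labs
    by (metis ne linorder_neqE_nat less_Suc_eq_le Suc_eq_plus1)
qed

lemma labs_inj: "inj_on labs MC"
proof (rule inj_onI)
  fix c c' assume c: "c \<in> MC" and c': "c' \<in> MC" and e: "labs c = labs c'"
  have "\<forall>k. k \<le> r + 1 \<longrightarrow> c ! k = c' ! k"
  proof (intro allI)
    fix k show "k \<le> r + 1 \<longrightarrow> c ! k = c' ! k"
    proof (induction k)
      case 0 then show ?case using c c' by (simp add: MC_def)
    next
      case (Suc k)
      show ?case
      proof
        assume k: "Suc k \<le> r + 1"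
        then have eq: "c ! k = c' ! k" using Suc by simp
        have "lab (c ! k) (c ! Suc k) = lab (c' ! k) (c' ! Suc k)" using e k labs_nth[of k c] labs_nth[of k c'] by simp
        then have "latom (c ! k) (c ! Suc k) = latom (c' ! k) (c' ! Suc k)" by (simp add: latom_def)
        moreover have "c ! Suc k = sup (c ! k) (latom (c ! k) (c ! Suc k))" using MC_lab[OF c, of k] k by simp
        moreover have "c' ! Suc k = sup (c' ! k) (latom (c' ! k) (c' ! Suc k))" using MC_lab[OF c', of k] k by simp
        ultimately show "c ! Suc k = c' ! Suc k" using eq by metis
      qed
    qed
  qed
  moreover have "length c = r + 2" "length c' = r + 2" using c c' by (simp_all add: MC_def)
  ultimately show "c = c'" by (metis nth_equalityI Suc_eq_plus1 add_2_eq_Suc' less_Suc_eq_le)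
qed


lemma swap_nth: "k \<noteq> length us \<Longrightarrow> k \<noteq> Suc (length us) \<Longrightarrow> (us @ a # b # vs) ! k = (us @ b # a # vs) ! k"
  by (cases "k < length us") (auto simp: nth_append nth_Cons' not_less)

lemma labs_swap:
  assumes c: "c \<in> MC" and l: "labs c = us @ a # b # vs" and ab: "a < b"
  shows "\<exists>c'\<in>MC. labs c' = us @ b # a # vs"
proof -
  define j where "j = length us"
  have jr: "Suc j \<le> r" using l length_labs[of c] by (simp add: j_def)
  define x0 where "x0 = c ! j"
  define x1 where "x1 = c ! Suc j"
  define x2 where "x2 = c ! Suc (Suc j)"
  have la: "lab x0 x1 = a" using l labs_nth[of j c] jr by (simp add: j_def x0_def x1_def)
  have lb: "lab x1 x2 = b" using l labs_nth[of "Suc j" c] jr by (simp add: j_def x2_def x1_def nth_append)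
  define \<alpha> where "\<alpha> = latom x0 x1"
  define \<beta> where "\<beta> = latom x1 x2"
  have c01: "covers x0 x1" using MC_cover[OF c, of j] jr by (simp add: x0_def x1_def)
  have c12: "covers x1 x2" using MC_cover[OF c, of "Suc j"] jr by (simp add: x2_def x1_def)
  have \<alpha>: "\<alpha> \<in> lset x0 x1" "idx \<alpha> = a" using lab_props[OF covers_less[OF c01]] la by (auto simp: \<alpha>_def)
  have \<beta>: "\<beta> \<in> lset x1 x2" "idx \<beta> = b" using lab_props[OF covers_less[OF c12]] lb by (auto simp: \<beta>_def)
  have x01: "x0 \<le> x1" and x12: "x1 \<le> x2" using c01 c12 by (auto dest: covers_less)
  have \<beta>at: "\<beta> \<in> atoms" "\<beta> \<le> x2" "\<not> \<beta> \<le> x1" using \<beta> by (auto simp: lset_def)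
  have \<beta>x0: "\<not> \<beta> \<le> x0" using \<beta>at x01 order_trans by blast
  define x' where "x' = sup x0 \<beta>"
  have cov1: "covers x0 x'" unfolding x'_def using join_cover[OF \<beta>at(1) \<beta>x0] .
  have x'2: "x' \<le> x2" unfolding x'_def using x01 x12 \<beta>at by simp
  have r0: "\<rho> x0 = j" using MC_rank[OF c, of j] jr by (simp add: x0_def)
  have r2: "\<rho> x2 = Suc (Suc j)" using MC_rank[OF c, of "Suc (Suc j)"] jr by (simp add: x2_def)
  have r': "\<rho> x' = Suc j" using rcov[OF cov1] r0 by simp
  have "x' \<noteq> x2" using r' r2 by auto
  then have cov2: "covers x' x2" using x'2 r' r2 by (intro rank_cover) (auto simp: less_le)
  have "\<beta> \<le> x'" by (simp add: x'_def)
  then have x1x': "x1 \<noteq> x'" using \<beta>at by auto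
  have meet: "inf x1 x' = x0" using cover_meet[OF c01 cov1 x1x'] .
  have lab1: "lab x0 x' = b"
  proof -
    have "\<beta> \<in> lset x0 x'" using \<beta>at \<beta>x0 \<open>\<beta> \<le> x'\<close> by (simp add: lset_def)
    moreover have "idx \<beta> \<le> idx g" if g: "g \<in> lset x0 x'" for g
    proof -
      have "\<not> g \<le> x1"
      proof
        assume "g \<le> x1"
        then have "g \<le> inf x1 x'" using g by (simp add: lset_def)
        then show False using g meet by (simp add: lset_def)
      qed
      then have "g \<in> lset x1 x2" using g x'2 by (auto simp: lset_def intro: order_trans)
      then show ?thesis using lab_props(3)[OF covers_less[OF c12]] lb \<beta> by auto
    qed
    ultimately show ?thesis using lab_unique(1) \<beta> by metis
  qed
  have lab2: "lab x' x2 = a"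
  proof -
    have \<alpha>x': "\<not> \<alpha> \<le> x'"
    proof
      assume "\<alpha> \<le> x'"
      then have "\<alpha> \<le> inf x1 x'" using \<alpha> by (simp add: lset_def)
      then show False using \<alpha> meet by (simp add: lset_def)
    qed
    have "\<alpha> \<in> lset x' x2" using \<alpha> \<alpha>x' x12 by (auto simp: lset_def intro: order_trans)
    moreover have "idx \<alpha> \<le> idx g" if g: "g \<in> lset x' x2" for g
    proof -
      have gx0: "\<not> g \<le> x0" using g cov1 by (auto simp: lset_def x'_def intro: order_trans)
      show ?thesis
      proof (cases "g \<le> x1")
        case True
        then have "g \<in> lset x0 x1" using g gx0 by (simp add: lset_def)
        then show ?thesis using lab_props(3)[OF covers_less[OF c01]] la \<alpha> by auto
      next
        case False
        then have "g \<in> lset x1 x2" using g by (simp add: lset_def)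
        then show ?thesis using lab_props(3)[OF covers_less[OF c12]] lb \<alpha> ab by fastforce
      qed
    qed
    ultimately show ?thesis using lab_unique(1) \<alpha> by metis
  qed
  define c' where "c' = c[Suc j := x']"
  have len: "length c' = r + 2" using c by (simp add: c'_def MC_def)
  have c'n: "c' ! k = (if k = Suc j then x' else c ! k)" if "k \<le> r + 1" for k
    using that c by (simp add: c'_def MC_def nth_list_update)
  have "c' \<in> MC"
  proof -
    have "c' ! 0 = bot" "c' ! (r + 1) = top" using c'n[of 0] c'n[of "r+1"] c jr by (auto simp: MC_def)
    moreover have "covers (c' ! k) (c' ! Suc k)" if k: "k \<le> r" for k
    proof -
      consider "k = j" | "k = Suc j" | "k \<noteq> j" "k \<noteq> Suc j" by blast
      then show ?thesis
      proof cases
        case 1 then show ?thesis using c'n[of k] c'n[of "Suc k"] k cov1 by (simp add: x0_def)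
      next
        case 2 then show ?thesis using c'n[of k] c'n[of "Suc k"] k cov2 by (simp add: x2_def)
      next
        case 3 then show ?thesis using c'n[of k] c'n[of "Suc k"] k MC_cover[OF c k] by simp
      qed
    qed
    ultimately show ?thesis using len by (simp add: MC_def)
  qed
  moreover have "labs c' = us @ b # a # vs"
  proof (rule nth_equalityI)
    show "length (labs c') = length (us @ b # a # vs)" using l length_labs[of c] length_labs[of c'] by simp
    fix k assume "k < length (labs c')"
    then have k: "k \<le> r" by (simp add: length_labs)
    consider "k = j" | "k = Suc j" | "k \<noteq> j" "k \<noteq> Suc j" by blast
    then show "labs c' ! k = (us @ b # a # vs) ! k"
    proof cases
      case 1 then show ?thesis using labs_nth[OF k, of c'] c'n[of k] c'n[of "Suc k"] k lab1
        by (simp add: x0_def j_def)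
    next
      case 2 then show ?thesis using labs_nth[OF k, of c'] c'n[of k] c'n[of "Suc k"] k lab2
        by (simp add: x2_def j_def nth_append)
    next
      case 3
      have "labs c' ! k = labs c ! k" using labs_nth[OF k, of c'] labs_nth[OF k, of c] c'n[of k] c'n[of "Suc k"] k 3
        by simp
      then show ?thesis using l swap_nth[of k us a b vs] 3 by (simp add: j_def)
    qed
  qed
  ultimately show ?thesis by blast
qed


definition Des :: "'a list \<Rightarrow> nat set" where
  "Des c = {k. 1 \<le> k \<and> k \<le> r \<and> lab (c ! k) (c ! Suc k) < lab (c ! (k - 1)) (c ! k)}"

lemma inc_labels:
  assumes c: "c \<in> MC" and kq: "k \<le> q" and qp: "q < p" and pr: "p \<le> r + 1"
    and nd: "\<forall>q'. k < q' \<and> q' < p \<longrightarrow> q' \<notin> Des c"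
  shows "lab (c ! k) (c ! Suc k) \<le> lab (c ! q) (c ! Suc q)"
  using kq qp
proof (induction q rule: dec_induct)
  case base then show ?case by simp
next
  case (step q)
  have "Suc q \<notin> Des c" using nd step by auto
  then have "\<not> lab (c ! Suc q) (c ! Suc (Suc q)) < lab (c ! q) (c ! Suc q)"
    using step pr by (auto simp: Des_def)
  then show ?case using step by simp
qed

lemma first_hit:
  assumes c: "c \<in> MC" and kp: "k < p" and pr: "p \<le> r + 1" and b: "b \<le> c ! p" "\<not> b \<le> c ! k"
  shows "\<exists>q. k \<le> q \<and> q < p \<and> b \<le> c ! Suc q \<and> \<not> b \<le> c ! q"
  using kp pr b
proof (induction p rule: less_induct)
  case (less p)
  then obtain p' where p': "p = Suc p'" by (cases p) auto
  show ?case
  proof (cases "b \<le> c ! p'")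
    case True
    then have "k < p'" using less.prems by (metis less_Suc_eq p')
    then show ?thesis using less.IH[of p'] less.prems True p' by fastforce
  next
    case False
    then show ?thesis using less.prems p' by (intro exI[of _ p']) auto
  qed
qed

lemma FL:
  assumes c: "c \<in> MC" and kp: "k < p" and pr: "p \<le> r + 1"
    and nd: "\<forall>q'. k < q' \<and> q' < p \<longrightarrow> q' \<notin> Des c"
  shows "latom (c ! k) (c ! Suc k) = latom (c ! k) (c ! p)"
proof -
  let ?a = "latom (c ! k) (c ! Suc k)"
  have a: "?a \<in> lset (c ! k) (c ! Suc k)" "idx ?a = lab (c ! k) (c ! Suc k)" using MC_lab[OF c, of k] kp pr by auto
  have "?a \<in> lset (c ! k) (c ! p)" using a(1) lset_mono_w[OF MC_mono[OF c, of "Suc k" p]] kp pr by auto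
  moreover have "idx ?a \<le> idx g" if g: "g \<in> lset (c ! k) (c ! p)" for g
  proof -
    obtain q where q: "k \<le> q" "q < p" "g \<le> c ! Suc q" "\<not> g \<le> c ! q"
      using first_hit[OF c kp pr, of g] g by (auto simp: lset_def)
    have "g \<in> lset (c ! q) (c ! Suc q)" using q g by (auto simp: lset_def)
    then have "lab (c ! q) (c ! Suc q) \<le> idx g" using lab_props(3)[OF covers_less[OF MC_cover[OF c]]] q pr by auto
    moreover have "lab (c ! k) (c ! Suc k) \<le> lab (c ! q) (c ! Suc q)" using inc_labels[OF c q(1) q(2) pr nd] .
    ultimately show ?thesis using a by simp
  qed
  ultimately show ?thesis using lab_unique(2) by metis
qed

lemma chain_eq:
  assumes c: "c \<in> MC" and c': "c' \<in> MC" and P: "P \<subseteq> {1..r}" and D: "Des c \<subseteq> P" "Des c' \<subseteq> P"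
    and agree: "\<forall>k\<in>P. c ! k = c' ! k"
  shows "c = c'"
proof -
  have "\<forall>k. k \<le> r + 1 \<longrightarrow> c ! k = c' ! k"
  proof (intro allI)
    fix k show "k \<le> r + 1 \<longrightarrow> c ! k = c' ! k"
    proof (induction k)
      case 0 then show ?case using c c' by (simp add: MC_def)
    next
      case (Suc k)
      show ?case
      proof
        assume sk: "Suc k \<le> r + 1"
        then have eq: "c ! k = c' ! k" using Suc by simp
        define p where "p = (LEAST p. k < p \<and> (p \<in> P \<or> p = r + 1))"
        have ex: "k < r + 1 \<and> (r + 1 \<in> P \<or> r + 1 = r + 1)" using sk by simp
        have p: "k < p" "p \<in> P \<or> p = r + 1" using LeastI[of "\<lambda>p. k < p \<and> (p \<in> P \<or> p = r + 1)", OF ex]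
          by (auto simp: p_def)
        have pr: "p \<le> r + 1" unfolding p_def by (rule Least_le) (use ex in blast)
        have gap: "q \<notin> P" if "k < q" "q < p" for q
          using not_less_Least[of q "\<lambda>p. k < p \<and> (p \<in> P \<or> p = r + 1)"] that by (auto simp: p_def)
        have nd: "\<forall>q'. k < q' \<and> q' < p \<longrightarrow> q' \<notin> Des c" "\<forall>q'. k < q' \<and> q' < p \<longrightarrow> q' \<notin> Des c'"
          using gap D by auto
        have cp: "c ! p = c' ! p" using p agree c c' by (auto simp: MC_def)
        have "latom (c ! k) (c ! Suc k) = latom (c' ! k) (c' ! Suc k)"
          using FL[OF c p(1) pr nd(1)] FL[OF c' p(1) pr nd(2)] eq cp by simp
        moreover have "c ! Suc k = sup (c ! k) (latom (c ! k) (c ! Suc k))" using MC_lab[OF c, of k] sk by simp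
        moreover have "c' ! Suc k = sup (c' ! k) (latom (c' ! k) (c' ! Suc k))" using MC_lab[OF c', of k] sk by simp
        ultimately show "c ! Suc k = c' ! Suc k" using eq by metis
      qed
    qed
  qed
  moreover have "length c = r + 2" "length c' = r + 2" using c c' by (simp_all add: MC_def)
  ultimately show "c = c'" by (metis nth_equalityI Suc_eq_plus1 add_2_eq_Suc' less_Suc_eq_le)
qed


lemma chain_min:
  fixes A :: "'b::order set"
  assumes "finite A" "A \<noteq> {}" "is_chain A"
  shows "\<exists>m\<in>A. \<forall>t\<in>A. m \<le> t"
  using assms
proof (induction A rule: finite_ne_induct)
  case (singleton x) then show ?case by simp
next
  case (insert x A)
  have chA: "is_chain A" using insert.prems unfolding is_chain_def by blast
  obtain m where m: "m \<in> A" "\<forall>t\<in>A. m \<le> t" using insert.IH[OF chA] by blast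
  have xm: "x \<le> m \<or> m \<le> x" using insert.prems m(1) unfolding is_chain_def by blast
  show ?case
  proof (cases "x \<le> m")
    case True
    have "\<forall>t\<in>insert x A. x \<le> t" using True m(2) order_trans by blast
    then show ?thesis by blast
  next
    case False
    then have "m \<le> x" using xm by blast
    then have "\<forall>t\<in>insert x A. m \<le> t" using m(2) by blast
    then show ?thesis using m(1) by blast
  qed
qed

lemma lab_step:
  assumes zt: "z < t"
  shows "latom z (sup z (latom z t)) = latom z t"
proof -
  let ?a = "latom z t"
  have a: "?a \<in> lset z t" "idx ?a = lab z t" using lab_props[OF zt] by auto
  have "?a \<in> lset z (sup z ?a)" using a by (simp add: lset_def)
  moreover have "idx ?a \<le> idx g" if g: "g \<in> lset z (sup z ?a)" for g
  proof -
    have "sup z ?a \<le> t" using a zt by (simp add: lset_def less_imp_le)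
    then have "g \<in> lset z t" using g lset_mono_w by blast
    then show ?thesis using lab_props(3)[OF zt] a by simp
  qed
  ultimately show ?thesis using lab_unique(2) by metis
qed

definition up :: "'a set \<Rightarrow> 'a \<Rightarrow> 'a set" where
  "up S z = {t \<in> insert top S. z < t}"
definition nt :: "'a set \<Rightarrow> 'a \<Rightarrow> 'a" where
  "nt S z = (LEAST t. t \<in> up S z)"
definition stp :: "'a set \<Rightarrow> 'a \<Rightarrow> 'a" where
  "stp S z = sup z (latom z (nt S z))"
definition gs :: "'a set \<Rightarrow> nat \<Rightarrow> 'a" where
  "gs S k = (stp S ^^ k) bot"

lemma nt_props:
  assumes ch: "is_chain S" and z: "z < top"
  shows "nt S z \<in> up S z" "\<And>t. t \<in> up S z \<Longrightarrow> nt S z \<le> t"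
proof -
  have "is_chain (insert top S)" using ch by (auto simp: is_chain_def)
  then have "is_chain (up S z)" by (auto simp: is_chain_def up_def)
  moreover have "up S z \<noteq> {}" using z by (auto simp: up_def)
  ultimately obtain m where m: "m \<in> up S z" "\<forall>t\<in>up S z. m \<le> t" using chain_min[of "up S z"] by auto
  have "nt S z = m" unfolding nt_def using m by (intro Least_equality) auto
  then show "nt S z \<in> up S z" "\<And>t. t \<in> up S z \<Longrightarrow> nt S z \<le> t" using m by auto
qed

lemma gs_Suc: "gs S (Suc k) = stp S (gs S k)" by (simp add: gs_def)

lemma gs_props:
  assumes S: "S \<subseteq> UNIV - {bot, top}" and ch: "is_chain S"
  shows "k \<le> r + 1 \<Longrightarrow> \<rho> (gs S k) = k \<and> (\<forall>s\<in>S. s \<le> gs S k \<or> gs S k < s)"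
proof (induction k)
  case 0
  have "\<forall>s\<in>S. s \<le> bot \<or> bot < s" by (metis bot.not_eq_extremum order_refl)
  then show ?case by (simp add: gs_def rbot)
next
  case (Suc k)
  then have IH: "\<rho> (gs S k) = k" "\<forall>s\<in>S. s \<le> gs S k \<or> gs S k < s" by auto
  let ?z = "gs S k"
  have "?z \<noteq> top" using IH rtop Suc.prems by auto
  then have zt: "?z < top" by (simp add: less_le)
  let ?t = "nt S ?z"
  have t: "?t \<in> up S ?z" "\<And>u. u \<in> up S ?z \<Longrightarrow> ?t \<le> u" using nt_props[OF ch zt] by auto
  have zlt: "?z < ?t" using t(1) by (simp add: up_def)
  have a: "latom ?z ?t \<in> lset ?z ?t" using lab_props[OF zlt] by simp
  have cov: "covers ?z (gs S (Suc k))" unfolding gs_Suc stp_def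
    using join_cover a by (simp add: lset_def)
  have le: "gs S (Suc k) \<le> ?t" unfolding gs_Suc stp_def using a zlt by (simp add: lset_def less_imp_le)
  have "\<rho> (gs S (Suc k)) = Suc k" using rcov[OF cov] IH by simp
  moreover have "s \<le> gs S (Suc k) \<or> gs S (Suc k) < s" if s: "s \<in> S" for s
  proof (cases "s \<le> ?z")
    case True then show ?thesis using cov covers_less by (metis less_imp_le order_trans)
  next
    case False
    then have "?z < s" using IH s by auto
    then have "s \<in> up S ?z" using s by (simp add: up_def)
    then have "gs S (Suc k) \<le> s" using t(2) le order_trans by blast
    then show ?thesis by (auto simp: less_le)
  qed
  ultimately show ?case by blast
qed

lemma gs_step:
  assumes S: "S \<subseteq> UNIV - {bot, top}" and ch: "is_chain S" and k: "k \<le> r"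
  shows "covers (gs S k) (gs S (Suc k))" "gs S (Suc k) \<le> nt S (gs S k)" "gs S k < nt S (gs S k)"
    "nt S (gs S k) \<in> up S (gs S k)" "\<And>u. u \<in> up S (gs S k) \<Longrightarrow> nt S (gs S k) \<le> u"
proof -
  let ?z = "gs S k"
  have "\<rho> ?z = k" using gs_props[OF S ch, of k] k by simp
  then have "?z \<noteq> top" using rtop k by auto
  then have zt: "?z < top" by (simp add: less_le)
  let ?t = "nt S ?z"
  show t: "?t \<in> up S ?z" "\<And>u. u \<in> up S ?z \<Longrightarrow> ?t \<le> u" using nt_props[OF ch zt] by auto
  show zlt: "?z < ?t" using t(1) by (simp add: up_def)
  have a: "latom ?z ?t \<in> lset ?z ?t" using lab_props[OF zlt] by simp
  show "covers ?z (gs S (Suc k))" unfolding gs_Suc stp_def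
    using join_cover a by (simp add: lset_def)
  show "gs S (Suc k) \<le> ?t" unfolding gs_Suc stp_def using a zlt by (simp add: lset_def less_imp_le)
qed

definition gc :: "'a set \<Rightarrow> 'a list" where
  "gc S = map (gs S) [0..<r+2]"

lemma gc_nth: "k < r + 2 \<Longrightarrow> gc S ! k = gs S k"
  by (simp add: gc_def del: upt_Suc)

lemma gc_MC:
  assumes S: "S \<subseteq> UNIV - {bot, top}" and ch: "is_chain S"
  shows "gc S \<in> MC"
proof -
  have "\<rho> (gs S (r + 1)) = \<rho> top" using gs_props[OF S ch, of "r+1"] rtop by simp
  then have "gs S (r + 1) = top" using rank_eq by (metis top_greatest)
  moreover have "gs S 0 = bot" by (simp add: gs_def)
  moreover have "covers (gs S k) (gs S (Suc k))" if "k \<le> r" for k using gs_step[OF S ch that] by simp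
  ultimately show ?thesis by (simp add: MC_def gc_nth gc_def[symmetric] del: upt_Suc) (simp add: gc_def)
qed


lemma gs_rank: "S \<subseteq> UNIV - {bot, top} \<Longrightarrow> is_chain S \<Longrightarrow> k \<le> r + 1 \<Longrightarrow> \<rho> (gs S k) = k"
  using gs_props by blast

lemma gs_hit:
  assumes S: "S \<subseteq> UNIV - {bot, top}" and ch: "is_chain S" and s: "s \<in> S"
  shows "\<rho> s \<le> r" "1 \<le> \<rho> s" "gs S (\<rho> s) = s"
proof -
  have "s \<noteq> bot" "s \<noteq> top" using S s by auto
  then have "bot < s" "s < top" by (simp_all add: bot.not_eq_extremum top.not_eq_extremum)
  then have r1: "0 < \<rho> s" "\<rho> s < r + 1" using rank_strict rbot rtop by (metis, metis)
  then show "\<rho> s \<le> r" "1 \<le> \<rho> s" by auto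
  have g: "\<rho> (gs S (\<rho> s)) = \<rho> s" "s \<le> gs S (\<rho> s) \<or> gs S (\<rho> s) < s"
    using gs_props[OF S ch, of "\<rho> s"] r1 s by auto
  show "gs S (\<rho> s) = s"
  proof (cases "s \<le> gs S (\<rho> s)")
    case True then show ?thesis using rank_eq g(1) by metis
  next
    case False then have "gs S (\<rho> s) < s" using g by simp
    then show ?thesis using rank_strict g(1) by (metis less_irrefl)
  qed
qed

lemma gc_Des:
  assumes S: "S \<subseteq> UNIV - {bot, top}" and ch: "is_chain S"
  shows "Des (gc S) \<subseteq> \<rho> ` S"
proof
  fix k assume kD: "k \<in> Des (gc S)"
  show "k \<in> \<rho> ` S"
  proof (rule ccontr)
    assume kS: "k \<notin> \<rho> ` S"
    from kD have k: "1 \<le> k" "k \<le> r" and dsc: "lab (gc S ! k) (gc S ! Suc k) < lab (gc S ! (k - 1)) (gc S ! k)"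
      by (auto simp: Des_def)
    obtain j where kj: "k = Suc j" using k by (cases k) auto
    define z where "z = gs S j"
    define z1 where "z1 = gs S (Suc j)"
    define z2 where "z2 = gs S (Suc (Suc j))"
    have dsc': "lab z1 z2 < lab z z1" using dsc kj k by (simp add: gc_nth z_def z1_def z2_def)
    define t where "t = nt S z"
    have st0: "z1 \<le> t" "z < t" "t \<in> up S z" "\<And>u. u \<in> up S z \<Longrightarrow> t \<le> u"
      using gs_step[OF S ch, of j] k kj by (auto simp: z_def z1_def t_def)
    have rz1: "\<rho> z1 = Suc j" using gs_rank[OF S ch, of "Suc j"] k kj by (simp add: z1_def)
    have z1S: "z1 \<notin> S" using kS rz1 kj by force
    have "z1 \<noteq> t"
    proof
      assume e: "z1 = t"
      then have "t \<in> insert top S" using st0(3) by (simp add: up_def)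
      then show False using e z1S rz1 rtop k kj by auto
    qed
    then have z1t: "z1 < t" using st0(1) by (simp add: less_le)
    have zz1: "z < z1" using gs_step(1)[OF S ch, of j] k kj by (simp add: z_def z1_def covers_less)
    have upsub: "up S z1 \<subseteq> up S z" using zz1 by (auto simp: up_def)
    have st1: "nt S z1 \<in> up S z1" "\<And>u. u \<in> up S z1 \<Longrightarrow> nt S z1 \<le> u"
      using gs_step[OF S ch, of "Suc j"] k kj by (auto simp: z1_def)
    have "t \<in> up S z1" using z1t st0(3) by (simp add: up_def)
    then have "nt S z1 \<le> t" using st1(2) by blast
    moreover have "t \<le> nt S z1" using st0(4) st1(1) upsub by blast
    ultimately have nt1: "nt S z1 = t" by simp
    have e1: "z1 = sup z (latom z t)" by (simp add: z1_def z_def gs_Suc stp_def t_def)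
    have e2: "z2 = sup z1 (latom z1 t)" by (simp add: z2_def z1_def gs_Suc[of S "Suc j"] stp_def nt1[unfolded z1_def])
    have l1: "lab z z1 = idx (latom z t)"
      using lab_props(2)[OF zz1] lab_step[OF st0(2)] e1 by simp
    have zz2: "z1 < z2" using gs_step(1)[OF S ch, of "Suc j"] k kj by (simp add: z2_def z1_def covers_less)
    have l2: "lab z1 z2 = idx (latom z1 t)"
      using lab_props(2)[OF zz2] lab_step[OF z1t] e2 by simp
    have "latom z1 t \<in> lset z t" using lab_props(1)[OF z1t] lset_mono_z zz1 by (meson less_imp_le)
    then have "lab z t \<le> idx (latom z1 t)" using lab_props(3)[OF st0(2)] by blast
    then have "lab z z1 \<le> lab z1 z2" using l1 l2 lab_props(2)[OF st0(2)] by simp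
    then show False using dsc' by simp
  qed
qed

definition Fc :: "'a set set" where
  "Fc = {S. S \<subseteq> UNIV - {bot, top} \<and> is_chain S}"

definition PP :: "('a list \<times> nat set) set" where
  "PP = Sigma MC (\<lambda>c. {P. Des c \<subseteq> P \<and> P \<subseteq> {1..r}})"

definition Phi :: "'a list \<times> nat set \<Rightarrow> 'a set" where
  "Phi p = (\<lambda>k. fst p ! k) ` snd p"

lemma Phi_in:
  assumes p: "(c, P) \<in> PP"
  shows "Phi (c, P) \<in> Fc" "card (Phi (c, P)) = card P" "\<rho> ` Phi (c, P) = P"
proof -
  have c: "c \<in> MC" and P: "P \<subseteq> {1..r}" using p by (auto simp: PP_def)
  have rk: "\<rho> (c ! k) = k" if "k \<in> P" for k using MC_rank[OF c, of k] P that by auto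
  have "c ! k \<noteq> bot \<and> c ! k \<noteq> top" if k: "k \<in> P" for k
  proof -
    have "1 \<le> k" "k \<le> r" using P k by auto
    then show ?thesis using rk[OF k] rbot rtop by auto
  qed
  moreover have "is_chain ((\<lambda>k. c ! k) ` P)" unfolding is_chain_def
  proof (intro ballI)
    fix x y assume "x \<in> (\<lambda>k. c ! k) ` P" "y \<in> (\<lambda>k. c ! k) ` P"
    then obtain k k' where kk: "k \<in> P" "k' \<in> P" "x = c ! k" "y = c ! k'" by blast
    have "k \<le> r + 1" "k' \<le> r + 1" using P kk by auto
    then show "x \<le> y \<or> y \<le> x" using MC_mono[OF c] kk nat_le_linear by metis
  qed
  ultimately show "Phi (c, P) \<in> Fc" by (auto simp: Fc_def Phi_def)
  have "inj_on (\<lambda>k. c ! k) P" using rk by (metis inj_onI)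
  then show "card (Phi (c, P)) = card P" by (simp add: Phi_def card_image)
  show "\<rho> ` Phi (c, P) = P" using rk by (force simp: Phi_def image_image)
qed

lemma Phi_inj: "inj_on Phi PP"
proof (rule inj_onI)
  fix p q assume p: "p \<in> PP" and q: "q \<in> PP" and e: "Phi p = Phi q"
  obtain c P where pc: "p = (c, P)" by (cases p)
  obtain c' P' where qc: "q = (c', P')" by (cases q)
  have PP': "P = P'" using Phi_in(3)[of c P] Phi_in(3)[of c' P'] p q pc qc e by simp
  have c: "c \<in> MC" "P \<subseteq> {1..r}" "Des c \<subseteq> P" using p pc by (auto simp: PP_def)
  have c': "c' \<in> MC" "Des c' \<subseteq> P" using q qc PP' by (auto simp: PP_def)
  have "c ! k = c' ! k" if k: "k \<in> P" for k
  proof -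
    have "c ! k \<in> Phi (c', P')" using e pc qc k by (auto simp: Phi_def)
    then obtain k' where k': "k' \<in> P" "c ! k = c' ! k'" using PP' by (auto simp: Phi_def)
    have "\<rho> (c ! k) = k" "\<rho> (c' ! k') = k'" using MC_rank[OF c(1), of k] MC_rank[OF c'(1), of k'] c(2) k k'(1) by auto
    then show ?thesis using k' by simp
  qed
  then have "c = c'" using chain_eq[OF c(1) c'(1) c(2) c(3) c'(2)] by blast
  then show "p = q" using pc qc PP' by simp
qed

lemma Phi_surj: "Phi ` PP = Fc"
proof
  show "Phi ` PP \<subseteq> Fc" using Phi_in(1) by auto
  show "Fc \<subseteq> Phi ` PP"
  proof
    fix S assume "S \<in> Fc"
    then have S: "S \<subseteq> UNIV - {bot, top}" and ch: "is_chain S" by (auto simp: Fc_def)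
    have "(gc S, \<rho> ` S) \<in> PP" unfolding PP_def
      using gc_MC[OF S ch] gc_Des[OF S ch] gs_hit[OF S ch] by auto
    moreover have "Phi (gc S, \<rho> ` S) = S"
    proof -
      have "gc S ! (\<rho> s) = s" if "s \<in> S" for s using gs_hit[OF S ch that] gc_nth by simp
      then show ?thesis by (force simp: Phi_def image_image)
    qed
    ultimately show "S \<in> Phi ` PP" by (metis image_eqI)
  qed
qed


lemma finite_Fc: "finite Fc" by simp

lemma card_Fc: "S \<in> Fc \<Longrightarrow> card S \<le> r"
proof -
  assume "S \<in> Fc"
  then obtain p where p: "p \<in> PP" "S = Phi p" using Phi_surj by blast
  obtain c P where pc: "p = (c, P)" by (cases p)
  have "card S = card P" using Phi_in(2)[of c P] p pc by simp
  also have "\<dots> \<le> card {1..r}" using p pc by (intro card_mono) (auto simp: PP_def)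
  finally show ?thesis by simp
qed

lemma sumA:
  "(\<Sum>j\<le>r. smult (int (fvec TYPE('a) j)) (Y ^ (r - j))) = (\<Sum>S\<in>Fc. (Y::int poly) ^ (r - card S))"
proof -
  have "(\<Sum>S\<in>Fc. Y ^ (r - card S)) = (\<Sum>j\<in>{..r}. \<Sum>S\<in>{S \<in> Fc. card S = j}. Y ^ (r - card S))"
    using card_Fc by (intro sum.group[symmetric]) auto
  also have "\<dots> = (\<Sum>j\<in>{..r}. of_nat (card {S \<in> Fc. card S = j}) * Y ^ (r - j))"
    by (intro sum.cong refl) simp
  also have "\<dots> = (\<Sum>j\<le>r. smult (int (fvec TYPE('a) j)) (Y ^ (r - j)))"
  proof (intro sum.cong refl)
    fix j
    have "faces TYPE('a) j = {S \<in> Fc. card S = j}" by (auto simp: faces_def Fc_def)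
    then show "of_nat (card {S \<in> Fc. card S = j}) * Y ^ (r - j) = smult (int (fvec TYPE('a) j)) (Y ^ (r - j))"
      by (simp add: fvec_def of_nat_mult_conv_smult)
  qed
  finally show ?thesis by simp
qed

lemma finite_PP: "finite PP"
  unfolding PP_def using finite_MC by (intro finite_SigmaI) auto

lemma sumB: "(\<Sum>S\<in>Fc. (Y::int poly) ^ (r - card S)) = (\<Sum>c\<in>MC. \<Sum>P\<in>{P. Des c \<subseteq> P \<and> P \<subseteq> {1..r}}. Y ^ (r - card P))"
proof -
  have bij: "bij_betw Phi PP Fc" using Phi_inj Phi_surj by (simp add: bij_betw_def)
  have "(\<Sum>S\<in>Fc. Y ^ (r - card S)) = (\<Sum>p\<in>PP. Y ^ (r - card (Phi p)))"
    using sum.reindex_bij_betw[OF bij, of "\<lambda>S. Y ^ (r - card S)"] by simp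
  also have "\<dots> = (\<Sum>p\<in>PP. Y ^ (r - card (snd p)))"
  proof (intro sum.cong refl)
    fix p assume "p \<in> PP"
    then show "Y ^ (r - card (Phi p)) = Y ^ (r - card (snd p))" using Phi_in(2)[of "fst p" "snd p"] by simp
  qed
  also have "\<dots> = (\<Sum>c\<in>MC. \<Sum>P\<in>{P. Des c \<subseteq> P \<and> P \<subseteq> {1..r}}. Y ^ (r - card P))"
    unfolding PP_def using finite_MC
    by (subst sum.Sigma) (auto simp: case_prod_beta)
  finally show ?thesis .
qed

lemma Des_sub: "Des c \<subseteq> {1..r}" by (auto simp: Des_def)

lemma sumC: "(\<Sum>c\<in>MC. \<Sum>P\<in>{P. Des c \<subseteq> P \<and> P \<subseteq> {1..r}}. [:-1, 1:] ^ (r - card P)) = (\<Sum>c\<in>MC. ([:0, 1:] :: int poly) ^ (r - card (Des c)))"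
proof (intro sum.cong refl)
  fix c
  have "(\<Sum>P\<in>{P. Des c \<subseteq> P \<and> P \<subseteq> {1..r}}. ([:-1, 1:] :: int poly) ^ (card {1..r} - card P))
     = ([:-1, 1:] + 1) ^ (card {1..r} - card (Des c))"
    using Des_sub by (intro subsets_sum) auto
  then show "(\<Sum>P\<in>{P. Des c \<subseteq> P \<and> P \<subseteq> {1..r}}. ([:-1, 1:] :: int poly) ^ (r - card P)) = [:0, 1:] ^ (r - card (Des c))"
    by (simp add: one_pCons)
qed

lemma coeffE:
  assumes i: "i \<le> r"
  shows "coeff (\<Sum>c\<in>MC. ([:0, 1:] :: int poly) ^ (r - card (Des c))) (r - i) = int (card {c \<in> MC. card (Des c) = i})"
proof -
  have cd: "card (Des c) \<le> r" for c using card_mono[OF _ Des_sub[of c]] by simp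
  have "coeff (\<Sum>c\<in>MC. ([:0, 1:] :: int poly) ^ (r - card (Des c))) (r - i)
      = (\<Sum>c\<in>MC. if card (Des c) = i then 1 else 0)"
    unfolding coeff_sum
  proof (intro sum.cong refl)
    fix c
    have m: "([:0, 1:] :: int poly) ^ (r - card (Des c)) = monom 1 (r - card (Des c))" by (simp add: monom_altdef)
    have iff: "(r - card (Des c) = r - i) \<longleftrightarrow> card (Des c) = i" using cd[of c] i by auto
    show "coeff (([:0, 1:] :: int poly) ^ (r - card (Des c))) (r - i) = (if card (Des c) = i then 1 else 0)"
      unfolding m coeff_monom using iff by simp
  qed
  also have "\<dots> = int (card {c \<in> MC. card (Des c) = i})"
    using finite_MC by (simp add: sum.If_cases Int_def)
  finally show ?thesis .
qed

lemma Des_card: "card (Des c) = des (labs c)"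
proof -
  have "Des c = Suc ` {j. Suc j < length (labs c) \<and> labs c ! Suc j < labs c ! j}"
  proof (intro set_eqI iffI)
    fix k assume "k \<in> Des c"
    then have k: "1 \<le> k" "k \<le> r" "lab (c ! k) (c ! Suc k) < lab (c ! (k - 1)) (c ! k)" by (auto simp: Des_def)
    then obtain j where j: "k = Suc j" by (cases k) auto
    have "labs c ! Suc j < labs c ! j" using k j labs_nth[of "Suc j" c] labs_nth[of j c] by simp
    then show "k \<in> Suc ` {j. Suc j < length (labs c) \<and> labs c ! Suc j < labs c ! j}"
      using j k by (simp add: length_labs)
  next
    fix k assume "k \<in> Suc ` {j. Suc j < length (labs c) \<and> labs c ! Suc j < labs c ! j}"
    then obtain j where j: "k = Suc j" "Suc j < r + 1" "labs c ! Suc j < labs c ! j" by (auto simp: length_labs)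
    then show "k \<in> Des c" using labs_nth[of "Suc j" c] labs_nth[of j c] by (simp add: Des_def)
  qed
  then show ?thesis by (simp add: des_def card_image)
qed

lemma hvec_eq:
  assumes d: "d \<le> r"
  shows "hvec TYPE('a) r d = int (card {s \<in> labs ` MC. des s = d})"
proof -
  have "hvec TYPE('a) r d = coeff (\<Sum>c\<in>MC. ([:0, 1:] :: int poly) ^ (r - card (Des c))) (r - d)"
    unfolding hvec_def sumA sumB sumC ..
  also have "\<dots> = int (card {c \<in> MC. card (Des c) = d})" by (rule coeffE[OF d])
  also have "{c \<in> MC. card (Des c) = d} = {c \<in> MC. des (labs c) = d}" by (simp add: Des_card)
  also have "card \<dots> = card (labs ` {c \<in> MC. des (labs c) = d})"
    using labs_inj by (intro card_image[symmetric]) (auto intro: inj_on_subset)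
  also have "labs ` {c \<in> MC. des (labs c) = d} = {s \<in> labs ` MC. des s = d}" by auto
  finally show ?thesis .
qed

end

theorem theorem1p1:
  fixes \<rho> :: "'a::{finite,bounded_lattice} \<Rightarrow> nat" and r i :: nat
  assumes "geometric_lattice \<rho>"
    and "\<rho> top = r + 1"
    and "1 \<le> i" and "2 * i \<le> r"
  shows "hvec TYPE('a) r (i - 1) \<le> hvec TYPE('a) r i \<and> hvec TYPE('a) r i \<le> hvec TYPE('a) r (r - i)"
proof -
  obtain f :: "'a \<Rightarrow> nat" and m where "f ` UNIV = {i. i < m}" "inj_on f UNIV"
    using finite_imp_inj_to_nat_seg[of "UNIV :: 'a set"] by auto
  then have inj: "inj f" by simp
  interpret geo \<rho> r f using assms(1,2) inj by unfold_locales
  define V where "V = labs ` MC"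
  have fin: "finite V" unfolding V_def using finite_MC by simp
  have wf: "\<forall>s\<in>V. distinct s \<and> length s = r + 1"
    unfolding V_def using distinct_labs length_labs by auto
  have sc: "swapclosed V" unfolding swapclosed_def V_def
  proof (intro allI impI)
    fix us a b vs assume m: "us @ a # b # vs \<in> labs ` MC" and ab: "a < b"
    then obtain c where "c \<in> MC" "labs c = us @ a # b # vs" by auto
    then obtain c' where "c' \<in> MC" "labs c' = us @ b # a # vs" using labs_swap ab by blast
    then show "us @ b # a # vs \<in> labs ` MC" by (metis image_eqI)
  qed
  have i2: "2 * i < r + 1" using assms(4) by simp
  have main: "card {s\<in>V. des s = i - 1} \<le> card {s\<in>V. des s = i}
       \<and> card {s\<in>V. des s = i} \<le> card {s\<in>V. des s = r + 1 - 1 - i}"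
    by (rule perm_ineq[OF fin wf sc assms(3) i2])
  have h1: "hvec TYPE('a) r (i - 1) = int (card {s\<in>V. des s = i - 1})" using hvec_eq[of "i - 1"] assms V_def by simp
  have h2: "hvec TYPE('a) r i = int (card {s\<in>V. des s = i})" using hvec_eq[of i] assms V_def by simp
  have h3: "hvec TYPE('a) r (r - i) = int (card {s\<in>V. des s = r - i})" using hvec_eq[of "r - i"] V_def by simp
  show ?thesis using main h1 h2 h3 by simp
qed

end
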